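(* Let $L$ be an $S$-Noetherian lattice, where $S$ is a multiplicatively closed subset of $L$ with $1\in S$, $0\notin S$. Then every $S$-irreducible element of $L$ is $S$-primary.
   Context: A multiplicative lattice is a complete lattice with a commutative, associative multiplication distributing over arbitrary joins, with $1$ as identity; $L_*$ is the set of compact elements; $(a:b)=\bigvee\{x\mid xb\le a\}$. An element $m$ is meet principal if $a\wedge mb=m((a:m)\wedge b)$ for all $a,b$, join principal if $a\vee(b:m)=(am\vee b):m$ for all $a,b$, and principal if both. An $r$-lattice is a modular, principally generated, compactly generated multiplicative lattice with $1$ compact. A multiplicatively closed subset is a nonempty $S\subseteq L_*$ closed under multiplication. An element $a$ is $S$-compact if $sa\le b\le a$ for some compact $b$ and some $s\in S$; an $S$-Noetherian lattice is an $r$-lattice in which every element is $S$-compact. $\sqrt a=\bigvee\{x\in L_*\mid x^n\le a\text{ for some }n\in\mathbb{Z}^+\}$. An element $q$ with $t\not\le q$ for all $t\in S$ is $S$-irreducible if whenever $s(a\wedge b)\le q\le a\wedge b$ for some $s\in S$ and $a,b\in L$, there exists $s'\in S$ with $ss'a\le q$ or $ss'b\le q$. A proper element $q$ with $t\not\le q$ for all $t\in S$ is $S$-primary if there exists $s\in S$ such that for all $c,d\in L$, $cd\le q$ implies $sc\le q$ or $sd\le\sqrt q$. *)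

theory Defs
  imports Main
begin

definition mult_lattice :: "('a::complete_lattice \<Rightarrow> 'a \<Rightarrow> 'a) \<Rightarrow> bool" where
  "mult_lattice mul \<longleftrightarrow>
     (\<forall>a b. mul a b = mul b a) \<and>
     (\<forall>a b c. mul (mul a b) c = mul a (mul b c)) \<and>
     (\<forall>a X. mul a (Sup X) = Sup ((\<lambda>x. mul a x) ` X)) \<and>
     (\<forall>a. mul top a = a)"

definition compact_el :: "'a::complete_lattice \<Rightarrow> bool" where
  "compact_el x \<longleftrightarrow> (\<forall>X. x \<le> Sup X \<longrightarrow> (\<exists>F. finite F \<and> F \<subseteq> X \<and> x \<le> Sup F))"

definition residual :: "('a::complete_lattice \<Rightarrow> 'a \<Rightarrow> 'a) \<Rightarrow> 'a \<Rightarrow> 'a \<Rightarrow> 'a" where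
  "residual mul a b = Sup {x. mul x b \<le> a}"

definition meet_principal :: "('a::complete_lattice \<Rightarrow> 'a \<Rightarrow> 'a) \<Rightarrow> 'a \<Rightarrow> bool" where
  "meet_principal mul m \<longleftrightarrow>
     (\<forall>a b. inf a (mul m b) = mul m (inf (residual mul a m) b))"

definition join_principal :: "('a::complete_lattice \<Rightarrow> 'a \<Rightarrow> 'a) \<Rightarrow> 'a \<Rightarrow> bool" where
  "join_principal mul m \<longleftrightarrow>
     (\<forall>a b. sup a (residual mul b m) = residual mul (sup (mul a m) b) m)"

definition principal_el :: "('a::complete_lattice \<Rightarrow> 'a \<Rightarrow> 'a) \<Rightarrow> 'a \<Rightarrow> bool" where
  "principal_el mul m \<longleftrightarrow> meet_principal mul m \<and> join_principal mul m"

definition r_lattice :: "('a::complete_lattice \<Rightarrow> 'a \<Rightarrow> 'a) \<Rightarrow> bool" where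
  "r_lattice (mul::'a \<Rightarrow> 'a \<Rightarrow> 'a) \<longleftrightarrow>
     mult_lattice mul \<and>
     (\<forall>a b c::'a. a \<le> c \<longrightarrow> sup a (inf b c) = inf (sup a b) c) \<and>
     (\<forall>x. x = Sup {y. principal_el mul y \<and> y \<le> x}) \<and>
     (\<forall>x::'a. x = Sup {y. compact_el y \<and> y \<le> x}) \<and>
     compact_el (top::'a)"

definition mult_closed :: "('a::complete_lattice \<Rightarrow> 'a \<Rightarrow> 'a) \<Rightarrow> 'a set \<Rightarrow> bool" where
  "mult_closed mul S \<longleftrightarrow> S \<noteq> {} \<and> (\<forall>s\<in>S. compact_el s) \<and>
     (\<forall>s\<in>S. \<forall>t\<in>S. mul s t \<in> S)"

definition S_compact :: "('a::complete_lattice \<Rightarrow> 'a \<Rightarrow> 'a) \<Rightarrow> 'a set \<Rightarrow> 'a \<Rightarrow> bool" where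
  "S_compact mul S a \<longleftrightarrow> (\<exists>s\<in>S. \<exists>b. compact_el b \<and> mul s a \<le> b \<and> b \<le> a)"

definition S_Noetherian :: "('a::complete_lattice \<Rightarrow> 'a \<Rightarrow> 'a) \<Rightarrow> 'a set \<Rightarrow> bool" where
  "S_Noetherian mul S \<longleftrightarrow> r_lattice mul \<and> (\<forall>a. S_compact mul S a)"

primrec mpow :: "('a::complete_lattice \<Rightarrow> 'a \<Rightarrow> 'a) \<Rightarrow> 'a \<Rightarrow> nat \<Rightarrow> 'a" where
  "mpow mul x 0 = top"
| "mpow mul x (Suc n) = mul x (mpow mul x n)"

definition radical :: "('a::complete_lattice \<Rightarrow> 'a \<Rightarrow> 'a) \<Rightarrow> 'a \<Rightarrow> 'a" where
  "radical mul a = Sup {x. compact_el x \<and> (\<exists>n::nat. n > 0 \<and> mpow mul x n \<le> a)}"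

definition S_irreducible :: "('a::complete_lattice \<Rightarrow> 'a \<Rightarrow> 'a) \<Rightarrow> 'a set \<Rightarrow> 'a \<Rightarrow> bool" where
  "S_irreducible mul S q \<longleftrightarrow>
     (\<forall>t\<in>S. \<not> t \<le> q) \<and>
     (\<forall>s\<in>S. \<forall>a b. mul s (inf a b) \<le> q \<and> q \<le> inf a b \<longrightarrow>
        (\<exists>s'\<in>S. mul (mul s s') a \<le> q \<or> mul (mul s s') b \<le> q))"

definition S_primary :: "('a::complete_lattice \<Rightarrow> 'a \<Rightarrow> 'a) \<Rightarrow> 'a set \<Rightarrow> 'a \<Rightarrow> bool" where
  "S_primary mul S q \<longleftrightarrow>
     q \<noteq> top \<and> (\<forall>t\<in>S. \<not> t \<le> q) \<and>
     (\<exists>s\<in>S. \<forall>c d. mul c d \<le> q \<longrightarrow> mul s c \<le> q \<or> mul s d \<le> radical mul q)"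

end

theory Submission
  imports Defs
begin

locale ml =
  fixes mul :: "'a::complete_lattice \<Rightarrow> 'a \<Rightarrow> 'a"
  assumes MLax: "mult_lattice mul"
begin

lemma comm: "mul a b = mul b a" using MLax unfolding mult_lattice_def by blast
lemma assoc: "mul (mul a b) c = mul a (mul b c)" using MLax unfolding mult_lattice_def by blast
lemma dSup: "mul a (Sup X) = Sup ((\<lambda>x. mul a x) ` X)" using MLax unfolding mult_lattice_def by blast
lemma topl[simp]: "mul top a = a" using MLax unfolding mult_lattice_def by blast
lemma topr[simp]: "mul a top = a" using topl comm by metis

lemma dsup: "mul a (sup b c) = sup (mul a b) (mul a c)"
  using dSup[of a "{b,c}"] by simp

lemma mono_r: "a \<le> b \<Longrightarrow> mul c a \<le> mul c b"
  by (metis dsup sup.absorb_iff2 sup.cobounded1)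
lemma mono_l: "a \<le> b \<Longrightarrow> mul a c \<le> mul b c"
  using mono_r comm by metis
lemma le_l: "mul a b \<le> a" using mono_r[of b top a] by simp
lemma le_r: "mul a b \<le> b" using le_l comm by metis

lemma res_iff: "x \<le> residual mul a b \<longleftrightarrow> mul x b \<le> a"
proof
  assume "x \<le> residual mul a b"
  then have "mul x b \<le> mul (residual mul a b) b" by (rule mono_l)
  also have "\<dots> = mul b (Sup {x. mul x b \<le> a})" unfolding residual_def using comm by metis
  also have "\<dots> = Sup ((\<lambda>x. mul b x) ` {x. mul x b \<le> a})" by (rule dSup)
  also have "\<dots> \<le> a" by (auto intro!: Sup_least simp: comm)
  finally show "mul x b \<le> a" .
next
  assume "mul x b \<le> a"
  then show "x \<le> residual mul a b" unfolding residual_def by (auto intro: Sup_upper)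
qed

lemma eq_by_le: "(\<And>x. x \<le> a \<longleftrightarrow> x \<le> (b::'a)) \<Longrightarrow> a = b"
  by (meson order.antisym order.refl)

lemma res_res: "residual mul (residual mul z d) e = residual mul z (mul d e)"
  by (rule eq_by_le) (simp add: res_iff, metis assoc comm)

lemma mpow_add: "mpow mul x (m + n) = mul (mpow mul x m) (mpow mul x n)"
  by (induction m) (simp_all add: assoc)

lemma mpow_mul: "mpow mul (mul x y) n = mul (mpow mul x n) (mpow mul y n)"
  by (induction n) (simp_all, metis assoc comm)

lemma mpow_le: "n > 0 \<Longrightarrow> mpow mul x n \<le> x"
  by (cases n) (simp_all add: le_l)

lemma mpow_mono: "x \<le> y \<Longrightarrow> mpow mul x n \<le> mpow mul y n"
  by (induction n) (simp_all, meson mono_l mono_r order_trans)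

lemma mp_pow:
  assumes "meet_principal mul d"
  shows "inf z (mpow mul d n) = mul (mpow mul d n) (residual mul z (mpow mul d n))"
proof (induction n arbitrary: z)
  case 0
  have "residual mul z top = z" by (rule eq_by_le) (simp add: res_iff)
  then show ?case by simp
next
  case (Suc n)
  have "inf z (mpow mul d (Suc n)) = mul d (inf (residual mul z d) (mpow mul d n))"
    using assms unfolding meet_principal_def by simp
  also have "\<dots> = mul d (mul (mpow mul d n) (residual mul (residual mul z d) (mpow mul d n)))"
    using Suc by simp
  also have "\<dots> = mul (mpow mul d (Suc n)) (residual mul z (mpow mul d (Suc n)))"
    by (simp add: res_res assoc)
  finally show ?case .
qed

end

lemma directed_compact:
  assumes "compact_el b" "D \<noteq> {}" "\<And>x y. x \<in> D \<Longrightarrow> y \<in> D \<Longrightarrow> \<exists>z\<in>D. x \<le> z \<and> y \<le> z"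
    "b \<le> Sup D"
  shows "\<exists>z\<in>D. b \<le> z"
proof -
  obtain F where F: "finite F" "F \<subseteq> D" "b \<le> Sup F"
    using assms(1,4) unfolding compact_el_def by blast
  have "\<exists>z\<in>D. \<forall>x\<in>F. x \<le> z" using F(1,2)
  proof (induction F rule: finite_induct)
    case empty then show ?case using assms(2) by auto
  next
    case (insert x F)
    then obtain z where z: "z \<in> D" "\<forall>y\<in>F. y \<le> z" by auto
    obtain w where "w \<in> D" "x \<le> w" "z \<le> w" using assms(3)[of x z] insert z by auto
    then show ?case using z by (intro bexI[of _ w]) (auto intro: order_trans)
  qed
  then obtain z where "z \<in> D" "\<forall>x\<in>F. x \<le> z" by blast
  then show ?thesis using F(3) by (meson Sup_least order_trans)
qed

context ml
begin

lemma pointwise: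
  assumes modl: "\<forall>a b c::'a. a \<le> c \<longrightarrow> sup a (inf b c) = inf (sup a b) c"
    and SC: "\<forall>a. S_compact mul S a"
    and MC: "mult_closed mul S"
    and IR: "S_irreducible mul S q"
    and MP: "meet_principal mul d"
    and cd: "mul c d \<le> q"
  shows "(\<exists>t\<in>S. mul t c \<le> q) \<or> (\<exists>t\<in>S. \<exists>k. mul t (mpow mul d k) \<le> q)"
proof -
  define R where "R n = residual mul q (mpow mul d n)" for n
  have Rs: "R n \<le> R (Suc n)" for n
    unfolding R_def res_iff
  proof -
    have "mul (residual mul q (mpow mul d n)) (mpow mul d (Suc n))
        = mul d (mul (residual mul q (mpow mul d n)) (mpow mul d n))"
      by (simp, metis assoc comm)
    also have "\<dots> \<le> q" using le_r res_iff order_trans by blast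
    finally show "mul (residual mul q (mpow mul d n)) (mpow mul d (Suc n)) \<le> q" .
  qed
  have Rm: "m \<le> n \<Longrightarrow> R m \<le> R n" for m n using Rs by (rule lift_Suc_mono_le)
  obtain s b where sb: "s \<in> S" "compact_el b" "mul s (Sup (range R)) \<le> b" "b \<le> Sup (range R)"
    using SC unfolding S_compact_def by blast
  obtain z where "z \<in> range R" "b \<le> z"
  proof -
    have "\<exists>z\<in>range R. x \<le> z \<and> y \<le> z" if xy: "x \<in> range R" "y \<in> range R" for x y
    proof -
      obtain i j where "x = R i" "y = R j" using xy by blast
      then show ?thesis using Rm[of i "max i j"] Rm[of j "max i j"] by auto
    qed
    then show ?thesis using directed_compact[OF sb(2) _ _ sb(4)] that by blast
  qed
  then obtain k where bk: "b \<le> R k" by auto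
  define K where "K = Suc k"
  have bK: "b \<le> R K" unfolding K_def using bk Rs order_trans by blast
  have sR: "mul s (R n) \<le> R K" for n
    using mono_r[of "R n" "Sup (range R)" s] sb(3) bK
    by (meson SUP_upper UNIV_I order_trans)
  define P where "P = mpow mul d K"
  define A where "A = sup q P"
  define B where "B = R K"
  have qB: "q \<le> B" unfolding B_def R_def res_iff by (rule le_l)
  have qAB: "q \<le> inf A B" using qB A_def by simp
  have AB: "inf A B = sup q (inf P B)" using modl qB A_def by simp
  have "inf P B = mul P (R (K + K))"
    using mp_pow[OF MP, of B K] unfolding P_def B_def R_def
    by (simp add: inf_commute res_res mpow_add)
  then have "mul s (inf P B) = mul P (mul s (R (K+K)))" by (metis assoc comm)
  also have "\<dots> \<le> mul P (R K)" by (rule mono_r[OF sR])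
  also have "\<dots> \<le> q" unfolding P_def R_def by (metis comm order.refl res_iff)
  finally have "mul s (inf P B) \<le> q" .
  then have "mul s (inf A B) \<le> q" unfolding AB dsup using le_r by simp
  then obtain s' where s': "s' \<in> S" "mul (mul s s') A \<le> q \<or> mul (mul s s') B \<le> q"
    using IR sb(1) qAB unfolding S_irreducible_def by blast
  have ss: "mul s s' \<in> S" using MC s' sb(1) unfolding mult_closed_def by blast
  show ?thesis
  proof (cases "mul (mul s s') A \<le> q")
    case True
    then have "mul (mul s s') P \<le> q" unfolding A_def using mono_r[of P "sup q P"]
      by (meson order_trans sup.cobounded2)
    then show ?thesis using ss P_def by blast
  next
    case False
    then have B: "mul (mul s s') B \<le> q" using s' by blast
    have "c \<le> R 1" unfolding R_def res_iff using cd by simp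
    also have "\<dots> \<le> B" unfolding B_def K_def by (rule Rm) simp
    finally have "mul (mul s s') c \<le> q" using B mono_r order_trans by blast
    then show ?thesis using ss by blast
  qed
qed

end

theorem mainTheorem6:
  fixes mul :: "'a::complete_lattice \<Rightarrow> 'a \<Rightarrow> 'a" and S :: "'a set" and q :: 'a
  assumes "S_Noetherian mul S"
    and "mult_closed mul S"
    and "top \<in> S" and "bot \<notin> S"
    and "S_irreducible mul S q"
  shows "S_primary mul S q"
proof -
  have RL: "r_lattice mul" and SC: "\<forall>a. S_compact mul S a"
    using assms(1) unfolding S_Noetherian_def by auto
  have MLm: "mult_lattice mul"
    and modl: "\<forall>a b c::'a. a \<le> c \<longrightarrow> sup a (inf b c) = inf (sup a b) c"
    and PG: "\<forall>x. x = Sup {y. principal_el mul y \<and> y \<le> x}"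
    and CG: "\<forall>x::'a. x = Sup {y. compact_el y \<and> y \<le> x}"
    using RL unfolding r_lattice_def by auto
  interpret ml mul by (rule ml.intro[OF MLm])
  have MC: "mult_closed mul S" by fact
  have nS: "\<forall>t\<in>S. \<not> t \<le> q" using assms(5) unfolding S_irreducible_def by blast
  have Sne: "S \<noteq> {}" using assms(3) by blast
  define D where "D = {residual mul q t | t. t \<in> S}"
  define QS where "QS = Sup D"
  obtain s0 b where sb: "s0 \<in> S" "compact_el b" "mul s0 QS \<le> b" "b \<le> QS"
    using SC unfolding S_compact_def by blast
  have dir: "\<exists>z\<in>D. x \<le> z \<and> y \<le> z" if xy: "x \<in> D" "y \<in> D" for x y
  proof -
    obtain t1 t2 where t: "t1 \<in> S" "t2 \<in> S" "x = residual mul q t1" "y = residual mul q t2"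
      using xy D_def by blast
    have "mul t1 t2 \<in> S" using MC t unfolding mult_closed_def by blast
    moreover have "x \<le> residual mul q (mul t1 t2)" unfolding t res_iff
      by (metis assoc le_l order.refl order_trans res_iff)
    moreover have "y \<le> residual mul q (mul t1 t2)" unfolding t res_iff
      by (metis assoc comm le_l order.refl order_trans res_iff)
    ultimately show ?thesis unfolding D_def by blast
  qed
  obtain z where "z \<in> D" "b \<le> z"
    using directed_compact[OF sb(2) _ dir sb(4)[unfolded QS_def]] Sne D_def by blast
  then obtain t where t: "t \<in> S" "b \<le> residual mul q t" using D_def by blast
  define u where "u = mul s0 t"
  have uS: "u \<in> S" using MC sb(1) t(1) unfolding u_def mult_closed_def by blast
  have uQS: "mul u QS \<le> q"
  proof -
    have "mul s0 QS \<le> residual mul q t" using sb(3) t(2) by simp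
    then have "mul (mul s0 QS) t \<le> q" using res_iff by blast
    then show ?thesis unfolding u_def by (metis assoc comm)
  qed
  have key: "mul u x \<le> q" if "t' \<in> S" "mul t' x \<le> q" for t' x
  proof -
    have "x \<le> residual mul q t'" using that res_iff comm by metis
    also have "\<dots> \<le> QS" unfolding QS_def D_def using that by (blast intro: Sup_upper)
    finally show ?thesis using uQS mono_r order_trans by blast
  qed
  have prim: "mul u c \<le> q \<or> mul u d \<le> radical mul q" if cd: "mul c d \<le> q" for c d
  proof (cases "mul u c \<le> q")
    case True then show ?thesis by simp
  next
    case False
    have pr: "mul u p \<le> radical mul q" if p: "principal_el mul p" "p \<le> d" for p
    proof -
      have "mul c p \<le> q" using mono_r[OF p(2)] cd order_trans by blast
      then have "(\<exists>t\<in>S. mul t c \<le> q) \<or> (\<exists>t\<in>S. \<exists>k. mul t (mpow mul p k) \<le> q)"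
        using pointwise[OF modl SC MC assms(5)] p(1) unfolding principal_el_def by blast
      then obtain t' k where tk: "t' \<in> S" "mul t' (mpow mul p k) \<le> q"
        using False key by blast
      have k0: "k > 0"
      proof (rule ccontr)
        assume "\<not> k > 0" then have "t' \<le> q" using tk by simp
        then show False using nS tk by blast
      qed
      have upk: "mul u (mpow mul p k) \<le> q" using key tk by blast
      have "mul u p = Sup {y. compact_el y \<and> y \<le> mul u p}" using CG by blast
      also have "\<dots> \<le> radical mul q" unfolding radical_def
      proof (rule Sup_least, rule Sup_upper, safe)
        fix y assume y: "compact_el y" "y \<le> mul u p"
        have "mpow mul y k \<le> mpow mul (mul u p) k" by (rule mpow_mono[OF y(2)])
        also have "\<dots> = mul (mpow mul u k) (mpow mul p k)" by (rule mpow_mul)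
        also have "\<dots> \<le> mul u (mpow mul p k)" by (rule mono_l[OF mpow_le[OF k0]])
        finally have "mpow mul y k \<le> q" using upk by simp
        then show "\<exists>n>0. mpow mul y n \<le> q" using k0 by blast
      qed
      finally show ?thesis .
    qed
    have "mul u d = mul u (Sup {y. principal_el mul y \<and> y \<le> d})" using PG by metis
    also have "\<dots> = Sup ((\<lambda>x. mul u x) ` {y. principal_el mul y \<and> y \<le> d})" by (rule dSup)
    also have "\<dots> \<le> radical mul q" using pr by (auto intro!: Sup_least)
    finally show ?thesis by simp
  qed
  have "q \<noteq> top" using nS assms(3) by auto
  then show ?thesis unfolding S_primary_def using nS uS prim by blast
qed

end
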